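(* Let $K_0$ be a finite extension of $\mathbb{Q}_2$ with odd absolute ramification index $e_0$, and let $K_2/K_0$ be a totally ramified cyclic extension of degree $4$ with Galois group generated by $\sigma$, with intermediate field $K_1$ (the fixed field of $\sigma^2$), whose lower ramification break numbers are $b_1=e_0$ and $b_2=b_1+2e_0$. Then for every odd integer $a$ there are $\alpha,\rho\in K_2$ with $v_2(\alpha)=a$ and $v_2(\rho)=a+(b_2-b_1)$ such that: if $a\equiv e_0\pmod 4$, then $\mu_1:=(\sigma-1)\alpha-\rho\in K_1$ with $v_2(\mu_1)=a+b_1$; if $a\equiv 3e_0\pmod 4$, then $\mu_0:=(\sigma+1)\alpha-\rho\in K_0$ with $v_2(\mu_0)=a+b_1$.
   Context: $v_2$ is the normalized valuation of $K_2$. The lower ramification break numbers of $\mathrm{Gal}(K_2/K_0)$ are the integers $j\ge1$ with $G_j\ne G_{j+1}$ in the lower-numbering ramification filtration. $(\sigma\pm1)\alpha=\sigma(\alpha)\pm\alpha$. *)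

theory Defs
  imports Main
begin

text \<open>A normalized discrete valuation on a field, given on nonzero elements
  (the value at 0 is irrelevant and never used).\<close>
definition normalized_discrete_valuation :: "('a::field \<Rightarrow> int) \<Rightarrow> bool" where
  "normalized_discrete_valuation v \<longleftrightarrow>
     (\<forall>x y. x \<noteq> 0 \<longrightarrow> y \<noteq> 0 \<longrightarrow> v (x * y) = v x + v y) \<and>
     (\<forall>x y. x \<noteq> 0 \<longrightarrow> y \<noteq> 0 \<longrightarrow> x + y \<noteq> 0 \<longrightarrow> v (x + y) \<ge> min (v x) (v y)) \<and>
     (\<exists>\<pi>. \<pi> \<noteq> 0 \<and> v \<pi> = 1)"

definition val_integral :: "('a::field \<Rightarrow> int) \<Rightarrow> 'a \<Rightarrow> bool" where
  "val_integral v x \<longleftrightarrow> x = 0 \<or> v x \<ge> 0"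

definition val_close :: "('a::field \<Rightarrow> int) \<Rightarrow> int \<Rightarrow> 'a \<Rightarrow> 'a \<Rightarrow> bool" where
  "val_close v N x y \<longleftrightarrow> x = y \<or> v (x - y) \<ge> N"

definition val_complete :: "('a::field \<Rightarrow> int) \<Rightarrow> bool" where
  "val_complete v \<longleftrightarrow>
     (\<forall>s::nat \<Rightarrow> 'a. (\<forall>N. \<exists>M. \<forall>m\<ge>M. \<forall>n\<ge>M. val_close v N (s m) (s n)) \<longrightarrow>
        (\<exists>L. \<forall>N. \<exists>M. \<forall>n\<ge>M. val_close v N (s n) L))"

definition finite_residue_field :: "('a::field \<Rightarrow> int) \<Rightarrow> bool" where
  "finite_residue_field v \<longleftrightarrow>
     (\<exists>R. finite R \<and> R \<subseteq> {x. val_integral v x} \<and>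
        (\<forall>x. val_integral v x \<longrightarrow> (\<exists>r\<in>R. val_close v 1 x r)))"

text \<open>A field of characteristic 0, complete for a normalized discrete valuation with
  finite residue field of characteristic 2: exactly a finite extension of Q_2.\<close>
definition finite_ext_Q2 :: "('a::field_char_0 \<Rightarrow> int) \<Rightarrow> bool" where
  "finite_ext_Q2 v \<longleftrightarrow> normalized_discrete_valuation v \<and> val_complete v \<and>
     finite_residue_field v \<and> v 2 > 0"

definition field_automorphism :: "('a::field \<Rightarrow> 'a) \<Rightarrow> bool" where
  "field_automorphism \<sigma> \<longleftrightarrow> bij \<sigma> \<and> (\<forall>x y. \<sigma> (x + y) = \<sigma> x + \<sigma> y) \<and>
     (\<forall>x y. \<sigma> (x * y) = \<sigma> x * \<sigma> y)"

definition fixed_field :: "('a \<Rightarrow> 'a) \<Rightarrow> 'a set" where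
  "fixed_field \<tau> = {x. \<tau> x = x}"

definition lower_ram_group :: "('a::field \<Rightarrow> 'a) \<Rightarrow> ('a \<Rightarrow> int) \<Rightarrow> int \<Rightarrow> ('a \<Rightarrow> 'a) set" where
  "lower_ram_group \<sigma> v j = {g \<in> {\<sigma> ^^ k | k. k < 4}.
      \<forall>x. val_integral v x \<longrightarrow> val_close v (j + 1) (g x) x}"

definition lower_breaks :: "('a::field \<Rightarrow> 'a) \<Rightarrow> ('a \<Rightarrow> int) \<Rightarrow> int set" where
  "lower_breaks \<sigma> v = {j. j \<ge> 1 \<and> lower_ram_group \<sigma> v j \<noteq> lower_ram_group \<sigma> v (j + 1)}"

end

theory Submission imports Defs begin

locale dval =
  fixes v :: "'a::field_char_0 \<Rightarrow> int"
  assumes nv: "normalized_discrete_valuation v"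
begin

definition ge :: "int \<Rightarrow> 'a \<Rightarrow> bool" where
  "ge n x \<longleftrightarrow> x = 0 \<or> n \<le> v x"

lemma v_mult: "x \<noteq> 0 \<Longrightarrow> y \<noteq> 0 \<Longrightarrow> v (x * y) = v x + v y"
  using nv unfolding normalized_discrete_valuation_def by blast

lemma v_add: "x \<noteq> 0 \<Longrightarrow> y \<noteq> 0 \<Longrightarrow> x + y \<noteq> 0 \<Longrightarrow> v (x + y) \<ge> min (v x) (v y)"
  using nv unfolding normalized_discrete_valuation_def by blast

lemma unif: "\<exists>p. p \<noteq> 0 \<and> v p = 1"
  using nv unfolding normalized_discrete_valuation_def by blast

lemma v_one[simp]: "v 1 = 0"
  using v_mult[of 1 1] by simp

lemma v_minus_one[simp]: "v (-1) = 0"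
  using v_mult[of "-1" "-1"] by simp

lemma v_uminus[simp]: "v (- x) = v x"
proof (cases "x = 0")
  case False
  have "v ((-1) * x) = v (-1) + v x" by (rule v_mult) (use False in auto)
  then show ?thesis by simp
qed simp

lemma v_inverse: "x \<noteq> 0 \<Longrightarrow> v (inverse x) = - v x"
  using v_mult[of x "inverse x"] by simp

lemma v_divide: "x \<noteq> 0 \<Longrightarrow> y \<noteq> 0 \<Longrightarrow> v (x / y) = v x - v y"
  by (simp add: divide_inverse v_mult v_inverse)

lemma v_power: "x \<noteq> 0 \<Longrightarrow> v (x ^ n) = int n * v x"
  by (induction n) (auto simp: v_mult algebra_simps)

lemma v_minus_comm: "v (x - y) = v (y - x)"
  by (metis minus_diff_eq v_uminus)

lemma ge_0[simp]: "ge n 0" by (simp add: ge_def)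

lemma ge_mono: "ge n x \<Longrightarrow> m \<le> n \<Longrightarrow> ge m x"
  by (auto simp: ge_def)

lemma ge_add: "ge n x \<Longrightarrow> ge n y \<Longrightarrow> ge n (x + y)"
  unfolding ge_def using v_add[of x y] by fastforce

lemma ge_uminus[simp]: "ge n (- x) = ge n x"
  by (simp add: ge_def)

lemma ge_diff: "ge n x \<Longrightarrow> ge n y \<Longrightarrow> ge n (x - y)"
  using ge_add[of n x "-y"] by simp

lemma ge_mult: "ge m x \<Longrightarrow> ge n y \<Longrightarrow> ge (m + n) (x * y)"
  unfolding ge_def by (cases "x = 0 \<or> y = 0") (auto simp: v_mult)

lemma ge_v: "ge (v x) x" by (simp add: ge_def)

lemma ge_iff: "x \<noteq> 0 \<Longrightarrow> ge n x \<longleftrightarrow> n \<le> v x" by (simp add: ge_def)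

lemma strict: assumes "x \<noteq> 0" "ge (v x + 1) y"
  shows "x + y \<noteq> 0 \<and> v (x + y) = v x"
proof (cases "y = 0")
  case True then show ?thesis using assms by simp
next
  case False
  then have vy: "v y > v x" using assms by (simp add: ge_def)
  have ne: "x + y \<noteq> 0"
  proof
    assume "x + y = 0" then have "y = - x" by (simp add: add_eq_0_iff)
    then show False using vy by simp
  qed
  have "v (x + y) \<ge> v x" using v_add[OF assms(1) False ne] vy by simp
  moreover have "v x \<ge> v (x + y)"
  proof -
    have "x = (x + y) + (- y)" by simp
    then have "v x \<ge> min (v (x+y)) (v y)" using v_add[OF ne, of "-y"] False assms(1) by (metis v_uminus neg_equal_0_iff_equal)
    then show ?thesis using vy by linarith
  qed
  ultimately show ?thesis using ne by simp
qed

lemma strict': assumes "x \<noteq> 0" "ge (v x + 1) y"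
  shows "x - y \<noteq> 0 \<and> v (x - y) = v x"
  using strict[of x "-y"] assms by simp

lemma ge_swap: "ge n (x - y) = ge n (y - x)"
  by (metis ge_uminus minus_diff_eq)

lemma ge_mult_const: "c \<noteq> 0 \<Longrightarrow> ge n x \<Longrightarrow> ge (n + v c) (c * x)"
  using ge_mult[of "v c" c n x] by (simp add: ge_v add.commute)

lemma ge_of_nat: "ge 0 (of_nat n)"
proof (induction n)
  case (Suc n)
  have "ge 0 (1::'a)" by (simp add: ge_def)
  then show ?case using ge_add[OF Suc] by (simp add: add.commute)
qed simp

lemma v_unit_ge: "v u = 0 \<Longrightarrow> u \<noteq> 0 \<Longrightarrow> ge n x \<Longrightarrow> ge n (u * x)"
  using ge_mult_const[of u n x] by simp

lemma ge_divide_unit: "v u = 0 \<Longrightarrow> u \<noteq> 0 \<Longrightarrow> ge n x \<Longrightarrow> ge n (x / u)"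
  using v_unit_ge[of "inverse u" n x] by (simp add: v_inverse divide_inverse mult.commute)

lemma unit_near: assumes "n \<ge> 1" "ge n (w - 1)" shows "w \<noteq> 0 \<and> v w = 0"
proof -
  have "ge (v 1 + 1) (w - 1)" using assms ge_mono by simp
  from strict[OF _ this] show ?thesis by simp
qed

lemma near_mult: assumes "n \<ge> 1" "ge n (z - 1)" "ge n (w - 1)" shows "ge n (z * w - 1)"
proof -
  have "z * w - 1 = (z - 1) * (w - 1) + (z - 1) + (w - 1)" by (simp add: algebra_simps)
  moreover have "ge n ((z - 1) * (w - 1))" using ge_mult[OF assms(2,3)] ge_mono assms(1) by force
  ultimately show ?thesis using ge_add assms by metis
qed

lemma near_inverse: assumes "n \<ge> 1" "ge n (w - 1)" shows "ge n (inverse w - 1)"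
proof -
  have w: "w \<noteq> 0" "v w = 0" using unit_near[OF assms] by auto
  have "inverse w - 1 = (1 - w) / w" using w by (simp add: field_simps)
  moreover have "ge n (1 - w)" using assms(2) by (metis ge_uminus minus_diff_eq)
  ultimately show ?thesis using ge_divide_unit w by metis
qed

lemma near_exact_inverse: assumes "n \<ge> 1" "w - 1 \<noteq> 0" "v (w - 1) = n"
  shows "inverse w - 1 \<noteq> 0 \<and> v (inverse w - 1) = n"
proof -
  have g: "ge n (w - 1)" using assms by (simp add: ge_def)
  have w: "w \<noteq> 0" "v w = 0" using unit_near[OF assms(1) g] by auto
  have e: "inverse w - 1 = (1 - w) / w" using w by (simp add: field_simps)
  have "1 - w \<noteq> 0" using assms(2) by simp
  moreover have "v (1 - w) = n" using assms(3) v_minus_comm by metis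
  ultimately show ?thesis using e w by (simp add: v_divide)
qed

lemma near_power: assumes "n \<ge> 1" "ge n (w - 1)" shows "ge n (w ^ k - 1)"
proof (induction k)
  case (Suc k)
  show ?case using near_mult[OF assms(1) assms(2) Suc] by simp
qed simp

end

locale brk = dval v for v :: "'a::field_char_0 \<Rightarrow> int" +
  fixes \<tau> :: "'a \<Rightarrow> 'a" and i :: int and p :: 'a
  assumes t_add: "\<And>x y. \<tau> (x + y) = \<tau> x + \<tau> y"
    and t_mult: "\<And>x y. \<tau> (x * y) = \<tau> x * \<tau> y"
    and t_one: "\<tau> 1 = 1"
    and t_zero: "\<And>x. \<tau> x = 0 \<longleftrightarrow> x = 0"
    and t_v: "\<And>x. x \<noteq> 0 \<Longrightarrow> v (\<tau> x) = v x"
    and i_pos: "i \<ge> 1"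
    and two_pos: "v 2 \<ge> 1"
    and Pi: "\<And>x. ge 0 x \<Longrightarrow> ge (i + 1) (\<tau> x - x)"
    and p_nz: "p \<noteq> 0" and p_v: "v p = 1"
    and tp_nz: "\<tau> p - p \<noteq> 0" and tp_v: "v (\<tau> p - p) = i + 1"
begin

lemma t_inverse: "\<tau> (inverse x) = inverse (\<tau> x)"
proof (cases "x = 0")
  case True then show ?thesis using t_zero[of 0] by simp
next
  case False
  have "\<tau> x * \<tau> (inverse x) = 1" using t_mult[of x "inverse x"] False t_one by simp
  then show ?thesis by (metis inverse_unique)
qed

lemma t_power: "\<tau> (x ^ n) = (\<tau> x) ^ n"
  by (induction n) (auto simp: t_one t_mult)

lemma t_divide: "\<tau> (x / y) = \<tau> x / \<tau> y"
  by (simp add: divide_inverse t_mult t_inverse)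

definition eps where "eps = \<tau> p / p - 1"

lemma eps: "eps \<noteq> 0" "v eps = i"
proof -
  have "eps = (\<tau> p - p) / p" unfolding eps_def using p_nz by (simp add: field_simps)
  then show "eps \<noteq> 0" "v eps = i" using tp_nz p_nz tp_v p_v by (auto simp: v_divide)
qed

lemma ge_eps: "ge i eps" using eps by (simp add: ge_def)

lemma binom: "ge (2 * i) ((1 + eps) ^ k - 1 - of_nat k * eps)"
proof (induction k)
  case (Suc k)
  have e: "(1 + eps) ^ Suc k - 1 - of_nat (Suc k) * eps
     = (1 + eps) * ((1 + eps) ^ k - 1 - of_nat k * eps) + of_nat k * (eps * eps)"
  proof -
    have "\<And>P e (n::'a). (1+e)*P - 1 - (n+1)*e = (1+e)*(P - 1 - n*e) + n*(e*e)"
      by (simp add: algebra_simps)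
    from this[where P="(1+eps)^k" and e=eps and n="of_nat k"] show ?thesis by (simp only: power_Suc of_nat_Suc add.commute)
  qed
  have g1: "ge 0 (1 + eps)"
  proof -
    have "ge 0 (1::'a)" by (simp add: ge_def)
    moreover have "ge 0 eps" using ge_mono[OF ge_eps] i_pos by simp
    ultimately show ?thesis using ge_add by blast
  qed
  have a: "ge (2*i) ((1 + eps) * ((1 + eps) ^ k - 1 - of_nat k * eps))"
    using ge_mult[OF g1 Suc] by simp
  have b0: "ge (0 + (i + i)) (of_nat k * (eps * eps))"
    using ge_mult[OF ge_of_nat ge_mult[OF ge_eps ge_eps]] .
  have "0 + (i + i) = 2 * i" by simp
  with b0 have b: "ge (2*i) (of_nat k * (eps * eps))" by metis
  show ?case using ge_add[OF a b] e by simp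
qed simp

lemma v_odd_nat: assumes "odd k" shows "v (of_nat k :: 'a) = 0"
proof -
  obtain j where k: "k = 2 * j + 1" using assms oddE by blast
  show ?thesis
  proof (cases "j = 0")
    case True then show ?thesis using k by simp
  next
    case False
    have "ge (v 2 + 0) (2 * (of_nat j :: 'a))"
      using ge_mult[OF ge_v[of 2] ge_of_nat[of j]] by simp
    then have "ge (v 1 + 1) (2 * (of_nat j :: 'a))" using two_pos ge_mono[of "v 2 + 0" _ "v 1 + 1"] by simp
    from strict[OF _ this] show ?thesis using k by (simp add: add.commute)
  qed
qed

lemma pow_near: "ge i ((1 + eps) ^ k - 1)"
  using near_power[of i "1 + eps" k] i_pos ge_eps by simp

lemma pow_exact: assumes "odd k" shows "(1 + eps) ^ k - 1 \<noteq> 0 \<and> v ((1 + eps) ^ k - 1) = i"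
proof -
  have kn: "of_nat k * eps \<noteq> 0" "v (of_nat k * eps) = i"
  proof -
    have "of_nat k \<noteq> (0::'a)" using assms by (intro notI) simp
    then show "of_nat k * eps \<noteq> 0" "v (of_nat k * eps) = i"
      using v_odd_nat[OF assms] eps by (auto simp: v_mult)
  qed
  have "ge (v (of_nat k * eps) + 1) ((1 + eps) ^ k - 1 - of_nat k * eps)"
    using ge_mono[OF binom[of k], of "i + 1"] kn(2) i_pos by simp
  from strict[OF kn(1) this] kn show ?thesis by simp
qed


lemma t_nz: "x \<noteq> 0 \<Longrightarrow> \<tau> x \<noteq> 0" using t_zero by simp

lemma q_unit: assumes "u \<noteq> 0" "v u = 0" shows "ge (i + 1) (\<tau> u / u - 1)"
proof -
  have "\<tau> u / u - 1 = (\<tau> u - u) / u" using assms by (simp add: field_simps)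
  moreover have "ge (i+1) (\<tau> u - u)" using Pi assms by (simp add: ge_def)
  ultimately show ?thesis using ge_divide_unit assms by metis
qed

lemma q_nonneg: assumes "x \<noteq> 0" "v x = int n"
  shows "ge i (\<tau> x / x - 1) \<and> (odd n \<longrightarrow> \<tau> x / x - 1 \<noteq> 0 \<and> v (\<tau> x / x - 1) = i)"
proof -
  define u where "u = x / p ^ n"
  have pn: "p ^ n \<noteq> 0" using p_nz by simp
  have u: "u \<noteq> 0" "v u = 0" using assms pn p_v by (auto simp: u_def v_divide v_power)
  have x: "x = p ^ n * u" using pn by (simp add: u_def)
  define A where "A = (1 + eps) ^ n"
  define w where "w = \<tau> u / u"
  have q: "\<tau> x / x = A * w"
    using x p_nz u t_nz[OF p_nz] t_nz[OF u(1)]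
    by (simp add: A_def w_def eps_def t_mult t_power field_simps)
  have A1: "ge i (A - 1)" unfolding A_def by (rule pow_near)
  have Au: "A \<noteq> 0" "v A = 0" using unit_near[OF i_pos A1] by auto
  have w1: "ge (i + 1) (w - 1)" unfolding w_def by (rule q_unit[OF u])
  have e: "\<tau> x / x - 1 = (A - 1) + A * (w - 1)" using q by (simp add: algebra_simps)
  have B: "ge (i + 1) (A * (w - 1))" using v_unit_ge[OF Au(2,1) w1] .
  have g: "ge i (\<tau> x / x - 1)" unfolding e using ge_add[OF A1 ge_mono[OF B]] by simp
  moreover have "odd n \<longrightarrow> \<tau> x / x - 1 \<noteq> 0 \<and> v (\<tau> x / x - 1) = i"
  proof
    assume "odd n"
    then have ex: "A - 1 \<noteq> 0" "v (A - 1) = i" using pow_exact unfolding A_def by auto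
    have "ge (v (A - 1) + 1) (A * (w - 1))" using B ex(2) by simp
    from strict[OF ex(1) this] ex(2) show "\<tau> x / x - 1 \<noteq> 0 \<and> v (\<tau> x / x - 1) = i" unfolding e by simp
  qed
  ultimately show ?thesis by blast
qed

lemma q_all: assumes "x \<noteq> 0"
  shows "ge i (\<tau> x / x - 1) \<and> (odd (v x) \<longrightarrow> \<tau> x / x - 1 \<noteq> 0 \<and> v (\<tau> x / x - 1) = i)"
proof (cases "v x \<ge> 0")
  case True
  then obtain n where n: "v x = int n" by (metis nonneg_eq_int)
  then show ?thesis using q_nonneg[OF assms n] by simp
next
  case False
  define y where "y = inverse x"
  have y: "y \<noteq> 0" "v y = - v x" using assms by (auto simp: y_def v_inverse)
  obtain n where n: "v y = int n" using y False by (metis neg_0_le_iff_le nonneg_eq_int linorder_not_le less_imp_le)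
  have Q: "ge i (\<tau> y / y - 1) \<and> (odd n \<longrightarrow> \<tau> y / y - 1 \<noteq> 0 \<and> v (\<tau> y / y - 1) = i)"
    using q_nonneg[OF y(1) n] .
  have inv: "\<tau> x / x = inverse (\<tau> y / y)"
    using assms t_nz[OF assms] by (simp add: y_def t_inverse divide_inverse)
  have "ge i (\<tau> x / x - 1)" unfolding inv using near_inverse[OF i_pos] Q by blast
  moreover have "odd (v x) \<longrightarrow> \<tau> x / x - 1 \<noteq> 0 \<and> v (\<tau> x / x - 1) = i"
  proof
    assume "odd (v x)"
    then have "odd n" using n y by (metis even_minus even_of_nat)
    then show "\<tau> x / x - 1 \<noteq> 0 \<and> v (\<tau> x / x - 1) = i"
      unfolding inv using near_exact_inverse[OF i_pos] Q by blast
  qed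
  ultimately show ?thesis by blast
qed

lemma F3': assumes "x \<noteq> 0" shows "ge (v x + i) (\<tau> x - x)"
proof -
  have "\<tau> x - x = x * (\<tau> x / x - 1)" using assms by (simp add: field_simps)
  then show ?thesis using ge_mult_const[OF assms, of i] q_all[OF assms] by (simp add: add.commute)
qed

lemma F3: assumes "x \<noteq> 0" "odd (v x)" shows "\<tau> x - x \<noteq> 0 \<and> v (\<tau> x - x) = v x + i"
proof -
  have e: "\<tau> x - x = x * (\<tau> x / x - 1)" using assms by (simp add: field_simps)
  have "\<tau> x / x - 1 \<noteq> 0 \<and> v (\<tau> x / x - 1) = i" using q_all[OF assms(1)] assms(2) by blast
  then show ?thesis using e assms(1) by (simp add: v_mult)
qed


end

locale cyc = dval v for v :: "'a::field_char_0 \<Rightarrow> int" +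
  fixes \<sigma> :: "'a \<Rightarrow> 'a" and e0 :: int
  assumes aut: "field_automorphism \<sigma>"
    and ord4: "\<And>x. \<sigma> (\<sigma> (\<sigma> (\<sigma> x))) = x"
    and v2: "v 2 = 4 * e0" and e0_odd: "odd e0" and e0_pos: "e0 \<ge> 1"
    and fin: "finite_residue_field v"
    and PA: "\<And>x. ge 0 x \<Longrightarrow> ge (e0 + 1) (\<sigma> x - x)"
    and PB: "\<exists>x. ge 0 x \<and> \<not> ge (e0 + 2) (\<sigma> x - x)"
    and PC: "\<And>x. ge 0 x \<Longrightarrow> ge (3 * e0 + 1) (\<sigma> (\<sigma> x) - x)"
    and PD: "\<exists>x. ge 0 x \<and> \<not> ge (3 * e0 + 2) (\<sigma> (\<sigma> x) - x)"
begin

lemma s_add: "\<sigma> (x + y) = \<sigma> x + \<sigma> y" using aut by (simp add: field_automorphism_def)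
lemma s_mult: "\<sigma> (x * y) = \<sigma> x * \<sigma> y" using aut by (simp add: field_automorphism_def)
lemma s_inj: "inj \<sigma>" using aut by (simp add: field_automorphism_def bij_def)
lemma s_0[simp]: "\<sigma> 0 = 0" using s_add[of 0 0] by simp
lemma s_zero[simp]: "\<sigma> x = 0 \<longleftrightarrow> x = 0" using s_inj s_0 by (metis injD)
lemma s_1[simp]: "\<sigma> 1 = 1"
proof -
  have "\<sigma> 1 = \<sigma> 1 * \<sigma> 1" using s_mult[of 1 1] by simp
  moreover have "\<sigma> 1 \<noteq> 0" by simp
  ultimately show ?thesis by (metis mult_cancel_right1)
qed
lemma s_uminus: "\<sigma> (- x) = - \<sigma> x" using s_add[of x "-x"] by (simp add: add_eq_0_iff2)
lemma s_diff: "\<sigma> (x - y) = \<sigma> x - \<sigma> y" using s_add[of x "-y"] s_uminus by simp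
lemma s_inverse: "\<sigma> (inverse x) = inverse (\<sigma> x)"
proof (cases "x = 0")
  case False
  have "\<sigma> x * \<sigma> (inverse x) = 1" using s_mult[of x "inverse x"] False by simp
  then show ?thesis by (metis inverse_unique)
qed simp
lemma s_divide: "\<sigma> (x / y) = \<sigma> x / \<sigma> y" by (simp add: divide_inverse s_mult s_inverse)
lemma s_power: "\<sigma> (x ^ n) = \<sigma> x ^ n" by (induction n) (auto simp: s_mult)
lemma s_of_nat: "\<sigma> (of_nat n) = of_nat n" by (induction n) (auto simp: s_add)
lemma s_2[simp]: "\<sigma> 2 = 2" using s_of_nat[of 2] by simp
lemma s_4[simp]: "\<sigma> 4 = 4" using s_of_nat[of 4] by simp


definition pi where "pi = (SOME p. p \<noteq> 0 \<and> v p = 1)"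
lemma pi: "pi \<noteq> 0" "v pi = 1"
  using someI_ex[OF unif] unfolding pi_def by auto

lemma ge0_pi: "ge 0 pi" using pi by (simp add: ge_def)

lemma near_self: assumes "x \<noteq> 0" "ge (v x + 1) (y - x)" shows "y \<noteq> 0 \<and> v y = v x"
  using strict[OF assms] by simp

lemma s_v_unit: assumes "u \<noteq> 0" "v u = 0" shows "v (\<sigma> u) = 0"
proof -
  have "ge (e0 + 1) (\<sigma> u - u)" using PA assms by (simp add: ge_def)
  then have "ge (v u + 1) (\<sigma> u - u)" using assms e0_pos ge_mono by simp
  then show ?thesis using near_self[OF assms(1)] assms by simp
qed

lemma s_v_pi: "v (\<sigma> pi) = 1"
proof -
  have "ge (e0 + 1) (\<sigma> pi - pi)" using PA ge0_pi by simp
  then have "ge (v pi + 1) (\<sigma> pi - pi)" using pi e0_pos ge_mono by simp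
  then show ?thesis using near_self[OF pi(1)] pi by simp
qed

lemma s_v_nonneg: assumes "x \<noteq> 0" "v x = int n" shows "v (\<sigma> x) = v x"
proof -
  define u where "u = x / pi ^ n"
  have pn: "pi ^ n \<noteq> 0" using pi by simp
  have u: "u \<noteq> 0" "v u = 0" using assms pn pi by (auto simp: u_def v_divide v_power)
  have x: "x = pi ^ n * u" using pn by (simp add: u_def)
  have "\<sigma> x = \<sigma> pi ^ n * \<sigma> u" using x by (simp add: s_mult s_power)
  then have "v (\<sigma> x) = int n * v (\<sigma> pi) + v (\<sigma> u)" using u pi by (simp add: v_mult v_power)
  then show ?thesis using s_v_pi s_v_unit[OF u] assms by simp
qed

lemma s_v: assumes "x \<noteq> 0" shows "v (\<sigma> x) = v x"
proof (cases "v x \<ge> 0")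
  case True
  then obtain n where "v x = int n" by (metis nonneg_eq_int)
  then show ?thesis using s_v_nonneg assms by blast
next
  case False
  have y: "inverse x \<noteq> 0" "v (inverse x) = - v x" using assms by (auto simp: v_inverse)
  obtain n where "v (inverse x) = int n" using y False by (metis neg_0_le_iff_le nonneg_eq_int linorder_not_le less_imp_le)
  then have "v (\<sigma> (inverse x)) = v (inverse x)" using s_v_nonneg y by blast
  then show ?thesis using y assms by (simp add: s_inverse v_inverse)
qed

lemma ge_s: "ge n x \<Longrightarrow> ge n (\<sigma> x)"
  by (cases "x = 0") (auto simp: ge_def s_v)

lemma ge_s_iff: "ge n (\<sigma> x) = ge n x"
  by (cases "x = 0") (auto simp: ge_def s_v)


lemma cg_trans: "ge 1 (x - y) \<Longrightarrow> ge 1 (y - z) \<Longrightarrow> ge 1 (x - z)"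
  using ge_add[of 1 "x - y" "y - z"] by simp

lemma cg_sym: "ge 1 (x - y) \<Longrightarrow> ge 1 (y - x)"
  by (metis ge_uminus minus_diff_eq)

lemma ge0_mult: "ge 0 a \<Longrightarrow> ge 0 b \<Longrightarrow> ge 0 (a * b)"
  using ge_mult[of 0 a 0 b] by simp

lemma ge0_power: assumes "ge 0 a" shows "ge 0 (a ^ n)"
proof (induction n)
  case 0 show ?case by (simp add: ge_def)
next
  case (Suc n) then show ?case using ge0_mult[OF assms Suc.IH] by simp
qed

lemma cg_mult: assumes "ge 0 a" "ge 0 d" "ge 1 (a - b)" "ge 1 (c - d)"
  shows "ge 1 (a * c - b * d)"
proof -
  have e: "a * c - b * d = a * (c - d) + (a - b) * d" by (simp add: algebra_simps)
  have "ge (0 + 1) (a * (c - d))" by (rule ge_mult[OF assms(1) assms(4)])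
  moreover have "ge (1 + 0) ((a - b) * d)" by (rule ge_mult[OF assms(3) assms(2)])
  ultimately show ?thesis unfolding e using ge_add by simp
qed

lemma cg_power: assumes "ge 0 a" "ge 0 b" "ge 1 (a - b)" shows "ge 1 (a ^ n - b ^ n)"
proof (induction n)
  case (Suc n)
  show ?case using cg_mult[OF assms(1) ge0_power[OF assms(2)] assms(3) Suc] by simp
qed (simp add: ge_def)

lemma sq_inj: assumes "ge 0 a" "ge 0 b" "ge 1 (a ^ 2 - b ^ 2)" shows "ge 1 (a - b)"
proof (cases "a = b")
  case False
  have e: "(a - b) ^ 2 = (a ^ 2 - b ^ 2) - 2 * b * (a - b)" by (simp add: algebra_simps power2_eq_square)
  have "ge (v 2 + 0) (2 * b)" using ge_mult[OF ge_v[of 2] assms(2)] .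
  then have "ge (v 2 + 0 + 0) (2 * b * (a - b))" using ge_mult[of "v 2 + 0" "2*b" 0 "a - b"] assms ge_diff by blast
  then have "ge 1 (2 * b * (a - b))" using v2 e0_pos ge_mono by fastforce
  then have "ge 1 ((a - b) ^ 2)" unfolding e using ge_diff assms(3) by blast
  then have "1 \<le> 2 * v (a - b)" using False by (simp add: ge_def v_power)
  then show ?thesis using False by (simp add: ge_def)
qed (simp add: ge_def)

lemma pow2_Suc: "(x::'a) ^ (2 ^ Suc n) = (x ^ (2 ^ n)) ^ 2"
proof -
  have "x ^ (2 ^ Suc n) = x ^ (2^n * 2)" by (simp add: mult.commute)
  also have "... = (x^(2^n))^2" by (simp only: power_mult)
  finally show ?thesis .
qed

lemma sq_cancel: assumes "ge 0 x" shows "ge 1 (x ^ (2 ^ n) - x ^ (2 ^ (n + k))) \<Longrightarrow> ge 1 (x - x ^ (2 ^ k))"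
proof (induction n)
  case 0 then show ?case by simp
next
  case (Suc n)
  have "ge 1 ((x ^ (2 ^ n)) ^ 2 - (x ^ (2 ^ (n + k))) ^ 2)"
    using Suc.prems by (simp only: pow2_Suc[symmetric] add_Suc)
  then have "ge 1 (x ^ (2 ^ n) - x ^ (2 ^ (n + k)))"
    using sq_inj ge0_power[OF assms] by blast
  then show ?case using Suc.IH by blast
qed

lemma periodic: assumes "ge 0 x" shows "\<exists>k\<ge>1. ge 1 (x - x ^ (2 ^ k))"
proof -
  obtain R where R: "finite R" "\<forall>x. val_integral v x \<longrightarrow> (\<exists>r\<in>R. val_close v 1 x r)"
    using fin unfolding finite_residue_field_def by blast
  have R': "\<forall>y. ge 0 y \<longrightarrow> (\<exists>r\<in>R. ge 1 (y - r))"
    using R(2) unfolding val_integral_def val_close_def ge_def by auto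
  define f where "f n = (SOME r. r \<in> R \<and> ge 1 (x ^ (2 ^ n) - r))" for n
  have f: "f n \<in> R \<and> ge 1 (x ^ (2 ^ n) - f n)" for n
  proof -
    have "\<exists>r. r \<in> R \<and> ge 1 (x ^ (2 ^ n) - r)" using R' ge0_power[OF assms] by blast
    then show ?thesis unfolding f_def by (rule someI_ex)
  qed
  have "\<not> inj f"
  proof
    assume "inj f"
    moreover have "f ` UNIV \<subseteq> R" using f by auto
    moreover have "finite (f ` UNIV)" using R(1) \<open>f ` UNIV \<subseteq> R\<close> finite_subset by blast
    ultimately have "finite (UNIV :: nat set)" using finite_imageD[of f UNIV] by blast
    then show False by simp
  qed
  then obtain n m where nm: "n \<noteq> m" "f n = f m" unfolding inj_def by blast
  have c: "ge 1 (x ^ (2 ^ a) - x ^ (2 ^ b))" if "f a = f b" for a b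
  proof -
    have "ge 1 (f a - x ^ (2 ^ b))" using cg_sym[OF conjunct2[OF f[of b]]] that by simp
    then show ?thesis using cg_trans[OF conjunct2[OF f[of a]]] by blast
  qed
  show ?thesis
  proof (cases "n < m")
    case True
    define k where "k = m - n"
    have "m = n + k" "k \<ge> 1" using True by (auto simp: k_def)
    then show ?thesis using sq_cancel[OF assms] c[OF nm(2)] by blast
  next
    case False
    define k where "k = n - m"
    have "n = m + k" "k \<ge> 1" using False nm(1) by (auto simp: k_def)
    then show ?thesis using sq_cancel[OF assms] c[OF nm(2)[symmetric]] by blast
  qed
qed

lemma fourth_root: assumes "ge 0 x" shows "\<exists>z. ge 0 z \<and> ge 1 (x - z ^ 4)"
proof -
  obtain k where k: "k \<ge> 1" "ge 1 (x - x ^ (2 ^ k))" using periodic[OF assms] by blast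
  have P: "ge 1 (x - x ^ (2 ^ (k * Suc j)))" for j
  proof (induction j)
    case 0 then show ?case using k by simp
  next
    case (Suc j)
    have "ge 1 (x ^ (2 ^ k) - (x ^ (2 ^ (k * Suc j))) ^ (2 ^ k))"
      using cg_power[OF assms ge0_power[OF assms] Suc] .
    moreover have "(x ^ (2 ^ (k * Suc j))) ^ (2 ^ k) = x ^ (2 ^ (k * Suc (Suc j)))"
    proof -
      have "(2::nat) ^ (k * Suc j) * 2 ^ k = 2 ^ (k * Suc (Suc j))"
        by (simp only: power_add[symmetric]) (simp add: algebra_simps)
      then show ?thesis by (metis power_mult)
    qed
    ultimately show ?case using cg_trans k(2) by metis
  qed
  define z where "z = x ^ (2 ^ (2 * k - 2))"
  have "z ^ 4 = x ^ (2 ^ (k * Suc 1))"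
  proof -
    have "2 ^ (2 * k - 2) * 4 = (2::nat) ^ (k * Suc 1)"
    proof -
      have "(2::nat) ^ (2 * k - 2) * 4 = 2 ^ (Suc (Suc (2 * k - 2)))" by simp
      moreover have "Suc (Suc (2 * k - 2)) = k * Suc 1" using k(1) by simp
      ultimately show ?thesis by metis
    qed
    then show ?thesis unfolding z_def by (simp add: power_mult[symmetric])
  qed
  then show ?thesis using P[of 1] ge0_power[OF assms] z_def by metis
qed

lemma cg_s: "ge 0 z \<Longrightarrow> ge 1 (\<sigma> z - z)"
  using PA[of z] e0_pos ge_mono by fastforce

lemma reps: assumes "ge 0 x" shows "\<exists>r. \<sigma> r = r \<and> ge 0 r \<and> ge 1 (x - r)"
proof -
  obtain z where z: "ge 0 z" "ge 1 (x - z ^ 4)" using fourth_root[OF assms] by blast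
  define z1 where "z1 = \<sigma> z"
  define z2 where "z2 = \<sigma> z1"
  define z3 where "z3 = \<sigma> z2"
  have i1: "ge 0 z1" "ge 0 z2" "ge 0 z3" using z(1) ge_s by (auto simp: z1_def z2_def z3_def)
  have c1: "ge 1 (z1 - z)" using cg_s[OF z(1)] z1_def by simp
  have c2: "ge 1 (z2 - z)" using cg_trans[OF cg_s[OF i1(1)] c1] z2_def by simp
  have c3: "ge 1 (z3 - z)" using cg_trans[OF cg_s[OF i1(2)] c2] z3_def by simp
  define r where "r = z * z1 * z2 * z3"
  have sr: "\<sigma> r = r" using ord4[of z] by (simp add: r_def z1_def z2_def z3_def s_mult algebra_simps)
  have gr: "ge 0 r" using z(1) i1 by (simp add: r_def ge0_mult)
  have a: "ge 1 (z * z1 - z * z)" using cg_mult[OF z(1) z(1) _ c1] by (simp add: ge_def)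
  have b: "ge 1 (z * z1 * z2 - z * z * z)" using cg_mult[OF ge0_mult[OF z(1) i1(1)] z(1) a c2] .
  have c: "ge 1 (r - z * z * z * z)"
    using cg_mult[OF ge0_mult[OF ge0_mult[OF z(1) i1(1)] i1(2)] z(1) b c3] by (simp add: r_def)
  have "z ^ 4 = z * z * z * z" by (simp add: power4_eq_xxxx)
  then have "ge 1 (x - z * z * z * z)" using z(2) by simp
  then have "ge 1 (x - r)" using cg_trans[OF _ cg_sym[OF c]] by blast
  then show ?thesis using sr gr by blast
qed


lemma expand_bound:
  assumes tadd: "\<And>x y. \<tau> (x + y) = \<tau> x + \<tau> y"
    and tmult: "\<And>x y. \<tau> (x * y) = \<tau> x * \<tau> y"
    and tfix: "\<And>r. \<sigma> r = r \<Longrightarrow> \<tau> r = r"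
    and tint: "\<And>x. ge 0 x \<Longrightarrow> ge 0 (\<tau> x)"
    and tp: "ge j (\<tau> pi - pi)" and j: "j \<ge> 1"
  shows "ge 0 x \<Longrightarrow> ge (min (int N) j) (\<tau> x - x)"
proof (induction N arbitrary: x)
  case 0
  have "ge 0 (\<tau> x - x)" using ge_diff[OF tint[OF 0] 0] .
  then show ?case using j by simp
next
  case (Suc N)
  obtain r where r: "\<sigma> r = r" "ge 0 r" "ge 1 (x - r)" using reps[OF Suc.prems] by blast
  define y where "y = (x - r) / pi"
  have gy: "ge 0 y"
  proof (cases "x - r = 0")
    case False
    then have "v y = v (x - r) - 1" using pi by (simp add: y_def v_divide)
    then show ?thesis using r(3) False by (simp add: ge_def)
  qed (simp add: y_def)
  have x: "x = r + pi * y" using pi by (simp add: y_def)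
  have tx: "\<tau> x = r + \<tau> pi * \<tau> y" using x tadd tmult tfix[OF r(1)] by simp
  have e: "\<tau> x - x = (\<tau> pi - pi) * \<tau> y + pi * (\<tau> y - y)"
    using tx x by (simp add: algebra_simps)
  have a: "ge (j + 0) ((\<tau> pi - pi) * \<tau> y)" using ge_mult[OF tp tint[OF gy]] .
  have b: "ge (1 + min (int N) j) (pi * (\<tau> y - y))"
    using ge_mult[OF ge_v[of pi] Suc.IH[OF gy]] pi by simp
  have "ge (min (int (Suc N)) j) ((\<tau> pi - pi) * \<tau> y)" using ge_mono[OF a] by simp
  moreover have "ge (min (int (Suc N)) j) (pi * (\<tau> y - y))" using ge_mono[OF b] by simp
  ultimately show ?case unfolding e using ge_add by blast
qed

lemma F2s: "\<sigma> pi - pi \<noteq> 0 \<and> v (\<sigma> pi - pi) = e0 + 1"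
proof (rule ccontr)
  assume H: "\<not> ?thesis"
  have "ge (e0 + 1) (\<sigma> pi - pi)" using PA ge0_pi .
  then have tp: "ge (e0 + 2) (\<sigma> pi - pi)" using H by (auto simp: ge_def)
  obtain x where x: "ge 0 x" "\<not> ge (e0 + 2) (\<sigma> x - x)" using PB by blast
  have "ge (min (int (nat (e0 + 2))) (e0 + 2)) (\<sigma> x - x)"
    by (rule expand_bound[OF s_add s_mult _ ge_s tp _ x(1)]) (use e0_pos in auto)
  then show False using x(2) e0_pos by simp
qed

lemma F2ss: "\<sigma> (\<sigma> pi) - pi \<noteq> 0 \<and> v (\<sigma> (\<sigma> pi) - pi) = 3 * e0 + 1"
proof (rule ccontr)
  assume H: "\<not> ?thesis"
  have "ge (3 * e0 + 1) (\<sigma> (\<sigma> pi) - pi)" using PC ge0_pi .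
  then have tp: "ge (3 * e0 + 2) (\<sigma> (\<sigma> pi) - pi)" using H by (auto simp: ge_def)
  obtain x where x: "ge 0 x" "\<not> ge (3 * e0 + 2) (\<sigma> (\<sigma> x) - x)" using PD by blast
  have "ge (min (int (nat (3 * e0 + 2))) (3 * e0 + 2)) (\<sigma> (\<sigma> x) - x)"
    by (rule expand_bound[where \<tau> = "\<lambda>x. \<sigma> (\<sigma> x)", OF _ _ _ _ tp _ x(1)])
       (use e0_pos in \<open>auto simp: s_add s_mult ge_s\<close>)
  then show False using x(2) e0_pos by simp
qed

end

sublocale cyc \<subseteq> S1: brk v \<sigma> e0 pi
  by unfold_locales (use F2s e0_pos v2 PA pi s_v s_add s_mult in auto)

sublocale cyc \<subseteq> S2: brk v "\<lambda>x. \<sigma> (\<sigma> x)" "3 * e0" pi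
  by unfold_locales (use F2ss e0_pos v2 PC pi s_v s_add s_mult in auto)


context cyc begin

lemma ss_v: "x \<noteq> 0 \<Longrightarrow> v (\<sigma> (\<sigma> x)) = v x" using s_v by simp

lemma exist_val: assumes "b \<noteq> 0"
  shows "\<exists>z. z \<noteq> 0 \<and> v z = k * v b \<and> (\<sigma> b = b \<longrightarrow> \<sigma> z = z) \<and> (\<sigma> (\<sigma> b) = b \<longrightarrow> \<sigma> (\<sigma> z) = z)"
proof (cases "k \<ge> 0")
  case True
  define z where "z = b ^ nat k"
  have "z \<noteq> 0" "v z = k * v b" using assms True by (auto simp: z_def v_power)
  moreover have "(\<sigma> b = b \<longrightarrow> \<sigma> z = z) \<and> (\<sigma> (\<sigma> b) = b \<longrightarrow> \<sigma> (\<sigma> z) = z)"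
    by (simp add: z_def s_power)
  ultimately show ?thesis by blast
next
  case False
  define z where "z = inverse (b ^ nat (- k))"
  have "z \<noteq> 0" "v z = k * v b" using assms False by (auto simp: z_def v_power v_inverse)
  moreover have "(\<sigma> b = b \<longrightarrow> \<sigma> z = z) \<and> (\<sigma> (\<sigma> b) = b \<longrightarrow> \<sigma> (\<sigma> z) = z)"
    by (simp add: z_def s_power s_inverse)
  ultimately show ?thesis by blast
qed

definition NN where "NN = pi * \<sigma> pi * \<sigma> (\<sigma> pi) * \<sigma> (\<sigma> (\<sigma> pi))"
definition DD where "DD = pi * \<sigma> (\<sigma> pi)"

lemma NN: "NN \<noteq> 0" "v NN = 4" "\<sigma> NN = NN"
proof -
  show "NN \<noteq> 0" using pi by (simp add: NN_def)
  show "v NN = 4" using pi s_v by (simp add: NN_def v_mult)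
  show "\<sigma> NN = NN" using ord4[of pi] by (simp add: NN_def s_mult algebra_simps)
qed

lemma DD: "DD \<noteq> 0" "v DD = 2" "\<sigma> (\<sigma> DD) = DD"
proof -
  show "DD \<noteq> 0" using pi by (simp add: DD_def)
  show "v DD = 2" using pi s_v by (simp add: DD_def v_mult)
  show "\<sigma> (\<sigma> DD) = DD" using ord4[of pi] by (simp add: DD_def s_mult algebra_simps)
qed

lemma K1_even: assumes "\<sigma> (\<sigma> y) = y" "y \<noteq> 0" shows "even (v y)"
  using S2.F3[OF assms(2)] assms(1) by auto

lemma rep_unit: assumes "u \<noteq> 0" "v u = 0"
  shows "\<exists>r. \<sigma> r = r \<and> r \<noteq> 0 \<and> v r = 0 \<and> ge 1 (u - r)"
proof -
  obtain r where r: "\<sigma> r = r" "ge 0 r" "ge 1 (u - r)" using reps[of u] assms by (auto simp: ge_def)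
  have "ge (v u + 1) (- (u - r))" using r(3) assms ge_swap[of _ u r] by simp
  from strict[OF assms(1) this] have "r \<noteq> 0 \<and> v r = 0" using assms by simp
  then show ?thesis using r by blast
qed

lemma approx_gen: assumes "y \<noteq> 0" "c0 \<noteq> 0" "v c0 = v y"
  shows "\<exists>r. \<sigma> r = r \<and> r \<noteq> 0 \<and> ge (v y + 1) (y - c0 * r)"
proof -
  define u where "u = y / c0"
  have u: "u \<noteq> 0" "v u = 0" using assms by (auto simp: u_def v_divide)
  obtain r where r: "\<sigma> r = r" "r \<noteq> 0" "ge 1 (u - r)" using rep_unit[OF u] by blast
  have "y - c0 * r = c0 * (u - r)" using assms by (simp add: u_def algebra_simps)
  moreover have "ge (1 + v c0) (c0 * (u - r))" using ge_mult_const[OF assms(2) r(3)] .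
  ultimately show ?thesis using r assms by (auto simp: add.commute)
qed

lemma AppK0: assumes "y \<noteq> 0" "4 dvd v y" shows "\<exists>c. \<sigma> c = c \<and> ge (v y + 1) (y - c)"
proof -
  obtain k where k: "v y = 4 * k" using assms by blast
  obtain c0 where c0: "c0 \<noteq> 0" "v c0 = k * v NN" "\<sigma> c0 = c0" using exist_val[OF NN(1), of k] NN by blast
  have "v c0 = v y" using c0 k NN by simp
  from approx_gen[OF assms(1) c0(1) this] obtain r where "\<sigma> r = r" "ge (v y + 1) (y - c0 * r)" by blast
  moreover have "\<sigma> (c0 * r) = c0 * r" using c0 \<open>\<sigma> r = r\<close> by (simp add: s_mult)
  ultimately show ?thesis by blast
qed

lemma AppK1: assumes "y \<noteq> 0" "even (v y)" shows "\<exists>c. \<sigma> (\<sigma> c) = c \<and> ge (v y + 1) (y - c)"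
proof -
  obtain k where k: "v y = 2 * k" using assms by blast
  obtain c0 where c0: "c0 \<noteq> 0" "v c0 = k * v DD" "\<sigma> (\<sigma> c0) = c0" using exist_val[OF DD(1), of k] DD by blast
  have "v c0 = v y" using c0 k DD by simp
  from approx_gen[OF assms(1) c0(1) this] obtain r where "\<sigma> r = r" "ge (v y + 1) (y - c0 * r)" by blast
  moreover have "\<sigma> (\<sigma> (c0 * r)) = c0 * r" using c0 \<open>\<sigma> r = r\<close> by (simp add: s_mult)
  ultimately show ?thesis by blast
qed

lemma LemL: assumes "y \<noteq> 0" "odd (v y - e0)"
  shows "\<exists>a1. a1 \<noteq> 0 \<and> v a1 = v y - e0 \<and> ge (v y + 1) (y - (\<sigma> a1 - a1))"
proof -
  obtain b where b: "b \<noteq> 0" "v b = (v y - e0) * v pi" using exist_val[OF pi(1)] by blast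
  have vb: "v b = v y - e0" using b pi by simp
  have db: "\<sigma> b - b \<noteq> 0" "v (\<sigma> b - b) = v y" using S1.F3[OF b(1)] vb assms by auto
  from approx_gen[OF assms(1) db] obtain r where r: "\<sigma> r = r" "r \<noteq> 0" "ge (v y + 1) (y - (\<sigma> b - b) * r)" by blast
  define a1 where "a1 = r * b"
  have "\<sigma> a1 - a1 = (\<sigma> b - b) * r" using r(1) by (simp add: a1_def s_mult algebra_simps)
  moreover have "a1 \<noteq> 0" "v a1 = v y - e0"
  proof -
    have "v r = 0"
    proof -
      have "y \<noteq> 0" by fact
      have vy1: "ge (v y + 1) (y - (\<sigma> b - b) * r)" by fact
      have "(\<sigma> b - b) * r \<noteq> 0 \<and> v ((\<sigma> b - b) * r) = v y"
      proof -
        have "ge (v y + 1) (- (y - (\<sigma> b - b) * r))" using vy1 ge_swap[of _ y] by simp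
        from strict[OF assms(1) this] show ?thesis by simp
      qed
      then show ?thesis using db r(2) v_mult[of "\<sigma> b - b" r] by simp
    qed
    then show "a1 \<noteq> 0" "v a1 = v y - e0" using r(2) b(1) vb by (auto simp: a1_def v_mult)
  qed
  ultimately show ?thesis using r(3) by metis
qed


definition qD where "qD = \<sigma> DD / DD"

lemma qD: "ge (2 * e0) (qD - 1)"
proof -
  define g where "g = \<sigma> pi / pi"
  have eps: "S1.eps = g - 1" by (simp add: S1.eps_def g_def)
  have sg: "\<sigma> (\<sigma> g) = \<sigma> (\<sigma> (\<sigma> pi)) / \<sigma> (\<sigma> pi)" by (simp add: g_def s_divide)
  have q0: "qD = (\<sigma> pi / pi) * (\<sigma> (\<sigma> (\<sigma> pi)) / \<sigma> (\<sigma> pi))"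
    using pi by (simp add: qD_def DD_def s_mult field_simps)
  have q: "qD = g * \<sigma> (\<sigma> g)" unfolding q0 sg by (simp add: g_def)
  define e where "e = S1.eps"
  have e: "e \<noteq> 0" "v e = e0" using S1.eps by (auto simp: e_def)
  have se: "\<sigma> (\<sigma> e) = \<sigma> (\<sigma> g) - 1" by (simp add: e_def eps s_diff)
  have g1: "g = 1 + e" using eps by (simp add: e_def)
  have g2: "\<sigma> (\<sigma> g) = 1 + \<sigma> (\<sigma> e)" using se by simp
  have qe0: "qD = (1 + e) * (1 + \<sigma> (\<sigma> e))" unfolding q g2 unfolding g1 ..
  have qe: "qD - 1 = 2 * e + (\<sigma> (\<sigma> e) - e) + e * \<sigma> (\<sigma> e)"
    unfolding qe0 by algebra
  have a: "ge (2 * e0) (2 * e)"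
  proof -
    have "ge (v 2 + v e) (2 * e)" using ge_mult[OF ge_v ge_v] .
    moreover have "2 * e0 \<le> v 2 + v e" using v2 e e0_pos by simp
    ultimately show ?thesis using ge_mono by blast
  qed
  have b: "ge (2 * e0) (\<sigma> (\<sigma> e) - e)"
  proof -
    have "ge (v e + 3 * e0) (\<sigma> (\<sigma> e) - e)" using S2.F3'[OF e(1)] .
    moreover have "2 * e0 \<le> v e + 3 * e0" using e e0_pos by simp
    ultimately show ?thesis using ge_mono by blast
  qed
  have c: "ge (2 * e0) (e * \<sigma> (\<sigma> e))"
  proof -
    have "ge (v e + v (\<sigma> (\<sigma> e))) (e * \<sigma> (\<sigma> e))" using ge_mult[OF ge_v ge_v] .
    moreover have "v e + v (\<sigma> (\<sigma> e)) = 2 * e0" using e ss_v[OF e(1)] by simp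
    ultimately show ?thesis by metis
  qed
  show ?thesis unfolding qe using ge_add[OF ge_add[OF a b] c] .
qed

lemma DDpow: "\<exists>z. z \<noteq> 0 \<and> v z = 2 * k \<and> \<sigma> (\<sigma> z) = z \<and> ge (v z + 2 * e0) (\<sigma> z - z)"
proof -
  have one: "2 * e0 \<ge> 1" using e0_pos by simp
  have sD: "\<sigma> DD = qD * DD" using DD by (simp add: qD_def)
  show ?thesis
  proof (cases "k \<ge> 0")
    case True
    define z where "z = DD ^ nat k"
    have z: "z \<noteq> 0" "v z = 2 * k" "\<sigma> (\<sigma> z) = z" using DD True by (auto simp: z_def v_power s_power)
    have "\<sigma> z - z = z * (qD ^ nat k - 1)" by (simp add: z_def s_power sD power_mult_distrib algebra_simps)
    moreover have "ge (2 * e0) (qD ^ nat k - 1)" using near_power[OF one qD] .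
    ultimately have "ge (2 * e0 + v z) (\<sigma> z - z)" using ge_mult_const[OF z(1)] by simp
    then show ?thesis using z by (metis add.commute)
  next
    case False
    define z where "z = inverse (DD ^ nat (- k))"
    have z: "z \<noteq> 0" "v z = 2 * k" "\<sigma> (\<sigma> z) = z" using DD False by (auto simp: z_def v_power v_inverse s_power s_inverse)
    have "\<sigma> z - z = z * (inverse (qD ^ nat (-k)) - 1)"
      using DD by (simp add: z_def s_power s_inverse sD power_mult_distrib algebra_simps)
    moreover have "ge (2 * e0) (inverse (qD ^ nat (-k)) - 1)" using near_inverse[OF one near_power[OF one qD]] .
    ultimately have "ge (2 * e0 + v z) (\<sigma> z - z)" using ge_mult_const[OF z(1)] by simp
    then show ?thesis using z by (metis add.commute)
  qed
qed

lemma K1_unit: "\<sigma> (\<sigma> u) = u \<Longrightarrow> ge 0 u \<Longrightarrow> ge (min (int N) (2 * e0)) (\<sigma> u - u)"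
proof (induction N arbitrary: u)
  case 0
  have "ge 0 (\<sigma> u - u)" using ge_diff[OF ge_s[OF 0(2)] 0(2)] .
  then show ?case using e0_pos by simp
next
  case (Suc N)
  obtain r where r: "\<sigma> r = r" "ge 0 r" "ge 1 (u - r)" using reps[OF Suc.prems(2)] by blast
  define w where "w = (u - r) / DD"
  have sw: "\<sigma> (\<sigma> w) = w" using Suc.prems(1) r(1) DD by (simp add: w_def s_divide s_diff)
  have gw: "ge 0 w"
  proof (cases "u - r = 0")
    case False
    have "\<sigma> (\<sigma> (u - r)) = u - r" using Suc.prems(1) r(1) by (simp add: s_diff)
    then have "even (v (u - r))" using K1_even False by blast
    moreover have "v (u - r) \<ge> 1" using r(3) False by (simp add: ge_def)
    ultimately have "v (u - r) \<ge> 2" by presburger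
    then show ?thesis using False DD by (simp add: w_def v_divide ge_def)
  qed (simp add: w_def)
  have u: "u = r + DD * w" using DD by (simp add: w_def)
  have e: "\<sigma> u - u = (\<sigma> DD - DD) * \<sigma> w + DD * (\<sigma> w - w)"
    using u r(1) by (simp add: s_add s_mult algebra_simps)
  have D2: "ge (2 + 2 * e0) (\<sigma> DD - DD)"
  proof -
    have "\<sigma> DD - DD = DD * (qD - 1)" using DD by (simp add: qD_def algebra_simps)
    then show ?thesis using ge_mult_const[OF DD(1) qD] DD by (simp add: add.commute)
  qed
  have a: "ge (2 + 2 * e0 + 0) ((\<sigma> DD - DD) * \<sigma> w)" using ge_mult[OF D2 ge_s[OF gw]] .
  have b: "ge (2 + min (int N) (2 * e0)) (DD * (\<sigma> w - w))"
    using ge_mult[OF ge_v[of DD] Suc.IH[OF sw gw]] DD by simp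
  have "ge (min (int (Suc N)) (2 * e0)) ((\<sigma> DD - DD) * \<sigma> w)" using ge_mono[OF a] by simp
  moreover have "ge (min (int (Suc N)) (2 * e0)) (DD * (\<sigma> w - w))" using ge_mono[OF b] by simp
  ultimately show ?case unfolding e using ge_add by blast
qed

lemma K1_delta: assumes "\<sigma> (\<sigma> y) = y" "y \<noteq> 0" shows "ge (v y + 2 * e0) (\<sigma> y - y)"
proof -
  obtain k where k: "v y = 2 * k" using K1_even[OF assms] by blast
  obtain z where z: "z \<noteq> 0" "v z = 2 * k" "\<sigma> (\<sigma> z) = z" "ge (v z + 2 * e0) (\<sigma> z - z)" using DDpow by blast
  define u where "u = y / z"
  have u: "u \<noteq> 0" "v u = 0" "\<sigma> (\<sigma> u) = u" using assms z k by (auto simp: u_def v_divide s_divide)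
  have y: "y = z * u" using z by (simp add: u_def)
  have e: "\<sigma> y - y = (\<sigma> z - z) * \<sigma> u + z * (\<sigma> u - u)" using y by (simp add: s_mult algebra_simps)
  have a: "ge (v z + 2 * e0 + v (\<sigma> u)) ((\<sigma> z - z) * \<sigma> u)" using ge_mult[OF z(4) ge_v[of "\<sigma> u"]] .
  then have a: "ge (v z + 2 * e0) ((\<sigma> z - z) * \<sigma> u)" using s_v u by simp
  have b0: "ge (min (int (nat (2 * e0))) (2 * e0)) (\<sigma> u - u)" using K1_unit[of u "nat (2 * e0)"] u by (simp add: ge_def)
  have b: "ge (v z + 2 * e0) (z * (\<sigma> u - u))" using ge_mult_const[OF z(1) b0] e0_pos by (simp add: add.commute)
  show ?thesis unfolding e using ge_add[OF a b] z k by simp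
qed


lemma v2': "v (2::'a) = 4 * e0" by (rule v2)

lemma ge_two: "ge n x \<Longrightarrow> ge (n + 4 * e0) (2 * x)"
  using ge_mult_const[of 2 n x] v2 by simp

lemma alpha_basic: assumes "\<alpha> \<noteq> 0" "v \<alpha> = a" "odd a"
  shows "\<sigma> \<alpha> - \<alpha> \<noteq> 0" "v (\<sigma> \<alpha> - \<alpha>) = a + e0"
    "\<sigma> (\<sigma> \<alpha>) - \<alpha> \<noteq> 0" "v (\<sigma> (\<sigma> \<alpha>) - \<alpha>) = a + 3 * e0"
    "\<sigma> (\<sigma> \<alpha>) - 2 * \<sigma> \<alpha> + \<alpha> \<noteq> 0" "v (\<sigma> (\<sigma> \<alpha>) - 2 * \<sigma> \<alpha> + \<alpha>) = a + 3 * e0"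
proof -
  show d1: "\<sigma> \<alpha> - \<alpha> \<noteq> 0" "v (\<sigma> \<alpha> - \<alpha>) = a + e0" using S1.F3[OF assms(1)] assms by auto
  show d2: "\<sigma> (\<sigma> \<alpha>) - \<alpha> \<noteq> 0" "v (\<sigma> (\<sigma> \<alpha>) - \<alpha>) = a + 3 * e0" using S2.F3[OF assms(1)] assms by auto
  have e: "\<sigma> (\<sigma> \<alpha>) - 2 * \<sigma> \<alpha> + \<alpha> = (\<sigma> (\<sigma> \<alpha>) - \<alpha>) - 2 * (\<sigma> \<alpha> - \<alpha>)"
    by (simp add: algebra_simps)
  have h: "ge (v (\<sigma> \<alpha> - \<alpha>) + 4 * e0) (2 * (\<sigma> \<alpha> - \<alpha>))" by (rule ge_two[OF ge_v])
  have "ge (v (\<sigma> (\<sigma> \<alpha>) - \<alpha>) + 1) (2 * (\<sigma> \<alpha> - \<alpha>))"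
    by (rule ge_mono[OF h]) (insert e0_pos, simp add: d1(2) d2(2))
  from strict'[OF d2(1) this] d2
  show "\<sigma> (\<sigma> \<alpha>) - 2 * \<sigma> \<alpha> + \<alpha> \<noteq> 0" "v (\<sigma> (\<sigma> \<alpha>) - 2 * \<sigma> \<alpha> + \<alpha>) = a + 3 * e0"
    unfolding e by auto
qed

lemma caseB: assumes "odd a" "a mod 4 = (3 * e0) mod 4"
  shows "\<exists>\<alpha> c. \<alpha> \<noteq> 0 \<and> v \<alpha> = a \<and> \<sigma> c = c \<and> c \<noteq> 0 \<and> v c = a + e0 \<and>
     \<sigma> \<alpha> - \<alpha> - c \<noteq> 0 \<and> v (\<sigma> \<alpha> - \<alpha> - c) = a + 2 * e0"
proof -
  have key: "\<sigma> \<alpha> - \<alpha> - c \<noteq> 0 \<and> v (\<sigma> \<alpha> - \<alpha> - c) \<le> a + 2 * e0 \<and>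
      (odd (v (\<sigma> \<alpha> - \<alpha> - c)) \<longrightarrow> v (\<sigma> \<alpha> - \<alpha> - c) = a + 2 * e0)"
    if h: "\<alpha> \<noteq> 0" "v \<alpha> = a" "\<sigma> c = c" for \<alpha> c
  proof -
    note ab = alpha_basic[OF h(1,2) assms(1)]
    define y where "y = \<sigma> \<alpha> - \<alpha> - c"
    have dy: "\<sigma> y - y = \<sigma> (\<sigma> \<alpha>) - 2 * \<sigma> \<alpha> + \<alpha>" using h(3) by (simp add: y_def s_diff)
    have ny: "y \<noteq> 0" using dy ab(5) by auto
    have "ge (v y + e0) (\<sigma> y - y)" using S1.F3'[OF ny] .
    then have "v y + e0 \<le> a + 3 * e0" using dy ab(5,6) by (simp add: ge_def)
    moreover have "odd (v y) \<longrightarrow> v y = a + 2 * e0" using S1.F3[OF ny] dy ab(6) by auto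
    ultimately show ?thesis using ny by (simp add: y_def)
  qed
  have "\<exists>\<alpha> c. \<alpha> \<noteq> 0 \<and> v \<alpha> = a \<and> \<sigma> c = c \<and> odd (v (\<sigma> \<alpha> - \<alpha> - c))"
  proof (rule ccontr)
    assume H: "\<not> ?thesis"
    have "\<exists>\<alpha> c. \<alpha> \<noteq> 0 \<and> v \<alpha> = a \<and> \<sigma> c = c \<and> v (\<sigma> \<alpha> - \<alpha> - c) \<ge> a + e0 + int n" for n
    proof (induction n)
      case 0
      obtain \<alpha> where al: "\<alpha> \<noteq> 0" "v \<alpha> = a * v pi" using exist_val[OF pi(1)] by blast
      then have "v \<alpha> = a" using pi by simp
      then show ?case using al alpha_basic[OF al(1) _ assms(1)] by (intro exI[of _ \<alpha>] exI[of _ 0]) auto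
    next
      case (Suc n)
      then obtain \<alpha> c where ac: "\<alpha> \<noteq> 0" "v \<alpha> = a" "\<sigma> c = c" "v (\<sigma> \<alpha> - \<alpha> - c) \<ge> a + e0 + int n" by blast
      define y where "y = \<sigma> \<alpha> - \<alpha> - c"
      have ny: "y \<noteq> 0" using key[OF ac(1-3)] y_def by simp
      have ev: "even (v y)" using H ac y_def by blast
      show ?case
      proof (cases "4 dvd v y")
        case True
        obtain c' where c': "\<sigma> c' = c'" "ge (v y + 1) (y - c')" using AppK0[OF ny True] by blast
        have "\<sigma> (c + c') = c + c'" using ac(3) c'(1) by (simp add: s_add)
        moreover have eq: "\<sigma> \<alpha> - \<alpha> - (c + c') = y - c'" by (simp add: y_def)
        moreover have "y - c' \<noteq> 0" using key[OF ac(1,2) calculation(1)] eq by simp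
        ultimately have "v (\<sigma> \<alpha> - \<alpha> - (c + c')) \<ge> v y + 1" using c'(2) unfolding eq by (simp add: ge_def)
        then show ?thesis using ac \<open>\<sigma> (c + c') = c + c'\<close> y_def by (intro exI[of _ \<alpha>] exI[of _ "c + c'"]) auto
      next
        case False
        have "v y \<noteq> a + e0"
        proof
          assume "v y = a + e0"
          then have "4 dvd v y" using assms(2) by presburger
          then show False using False by simp
        qed
        then have gt: "v y > a + e0" using ac(4) y_def by simp
        have od: "odd (v y - e0)" using ev e0_odd by simp
        obtain a1 where a1: "a1 \<noteq> 0" "v a1 = v y - e0" "ge (v y + 1) (y - (\<sigma> a1 - a1))" using LemL[OF ny od] by blast
        define \<alpha>' where "\<alpha>' = \<alpha> - a1"
        have "ge (v \<alpha> + 1) a1" using a1 gt ac(2) by (simp add: ge_def)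
        from strict'[OF ac(1) this] have al': "\<alpha>' \<noteq> 0" "v \<alpha>' = a" using ac(2) by (auto simp: \<alpha>'_def)
        have e: "\<sigma> \<alpha>' - \<alpha>' - c = y - (\<sigma> a1 - a1)" by (simp add: \<alpha>'_def y_def s_diff)
        have "\<sigma> \<alpha>' - \<alpha>' - c \<noteq> 0" using key[OF al' ac(3)] by simp
        then have "v (\<sigma> \<alpha>' - \<alpha>' - c) \<ge> v y + 1" using a1(3) e by (simp add: ge_def)
        then show ?thesis using al' ac(3,4) y_def by (intro exI[of _ \<alpha>'] exI[of _ c]) auto
      qed
    qed
    from this[of "nat (e0 + 1)"] obtain \<alpha> c where ac: "\<alpha> \<noteq> 0" "v \<alpha> = a" "\<sigma> c = c"
      "v (\<sigma> \<alpha> - \<alpha> - c) \<ge> a + e0 + int (nat (e0 + 1))" by blast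
    then show False using key[OF ac(1-3)] e0_pos by simp
  qed
  then obtain \<alpha> c where ac: "\<alpha> \<noteq> 0" "v \<alpha> = a" "\<sigma> c = c" "odd (v (\<sigma> \<alpha> - \<alpha> - c))" by blast
  have y: "\<sigma> \<alpha> - \<alpha> - c \<noteq> 0" "v (\<sigma> \<alpha> - \<alpha> - c) = a + 2 * e0" using key[OF ac(1-3)] ac(4) by auto
  note ab = alpha_basic[OF ac(1,2) assms(1)]
  have "ge (v (\<sigma> \<alpha> - \<alpha>) + 1) (- (\<sigma> \<alpha> - \<alpha> - c))" using y ab e0_pos v_minus_comm[of c "\<sigma> \<alpha> - \<alpha>"] by (simp add: ge_def)
  from strict[OF ab(1) this] have "c \<noteq> 0" "v c = a + e0" using ab by auto
  then show ?thesis using ac y by blast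
qed


lemma caseA: assumes "odd a" "a mod 4 = e0 mod 4"
  shows "\<exists>\<alpha> \<mu>. \<alpha> \<noteq> 0 \<and> v \<alpha> = a \<and> \<sigma> (\<sigma> \<mu>) = \<mu> \<and> \<mu> \<noteq> 0 \<and> v \<mu> = a + e0 \<and>
     \<sigma> \<alpha> - \<alpha> - \<mu> \<noteq> 0 \<and> v (\<sigma> \<alpha> - \<alpha> - \<mu>) = a + 2 * e0"
proof -
  obtain \<alpha> where al: "\<alpha> \<noteq> 0" "v \<alpha> = a * v pi" using exist_val[OF pi(1)] by blast
  then have va: "v \<alpha> = a" using pi by simp
  note ab = alpha_basic[OF al(1) va assms(1)]
  define x where "x = \<alpha> + \<sigma> (\<sigma> \<alpha>)"
  have sx: "\<sigma> (\<sigma> x) = x" using ord4[of \<alpha>] by (simp add: x_def s_add)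
  have gx: "ge (a + 3 * e0) x"
  proof -
    have e: "x = 2 * \<alpha> + (\<sigma> (\<sigma> \<alpha>) - \<alpha>)" by (simp add: x_def algebra_simps)
    have "ge (a + 4 * e0) (2 * \<alpha>)" using ge_two[OF ge_v[of \<alpha>]] va by simp
    then have "ge (a + 3 * e0) (2 * \<alpha>)" by (rule ge_mono) (insert e0_pos, simp)
    moreover have "ge (a + 3 * e0) (\<sigma> (\<sigma> \<alpha>) - \<alpha>)" using ab by (simp add: ge_def)
    ultimately show ?thesis unfolding e using ge_add by blast
  qed
  have ev: "even (a + 3 * e0)" using assms(1) e0_odd by simp
  obtain c where c: "\<sigma> c = c" "ge (a + 3 * e0 + 1) (x - c)"
  proof (cases "x \<noteq> 0 \<and> v x = a + 3 * e0")
    case True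
    have "4 dvd v x" using True assms(2) by presburger
    from AppK0[OF conjunct1[OF True] this] True that show ?thesis by auto
  next
    case False
    then have "ge (a + 3 * e0 + 1) (x - 0)" using gx by (auto simp: ge_def)
    then show ?thesis using that[of 0] by simp
  qed
  define x' where "x' = x - c"
  have sx': "\<sigma> (\<sigma> x') = x'" using sx c(1) by (simp add: x'_def s_diff)
  have gx': "ge (a + 3 * e0 + 2) x'"
  proof (cases "x' = 0")
    case False
    have "even (v x')" using K1_even[OF sx' False] .
    moreover have "v x' \<ge> a + 3 * e0 + 1" using c(2) False by (simp add: x'_def ge_def)
    ultimately show ?thesis using ev False by (simp add: ge_def) presburger
  qed simp
  have dx: "ge (a + 5 * e0 + 2) (\<sigma> x - x)"
  proof -
    have "\<sigma> x - x = \<sigma> x' - x'" using c(1) by (simp add: x'_def s_diff)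
    moreover have "ge (a + 5 * e0 + 2) (\<sigma> x' - x')"
    proof (cases "x' = 0")
      case False
      have "ge (v x' + 2 * e0) (\<sigma> x' - x')" using K1_delta[OF sx' False] .
      moreover have "v x' \<ge> a + 3 * e0 + 2" using gx' False by (simp add: ge_def)
      ultimately show ?thesis using ge_mono[of "v x' + 2 * e0" _ "a + 5 * e0 + 2"] by simp
    qed simp
    ultimately show ?thesis by simp
  qed
  define tr where "tr = x + \<sigma> x"
  have gtr: "ge (a + 5 * e0 + 1) tr"
  proof -
    have e: "tr = 2 * x + (\<sigma> x - x)" by (simp add: tr_def algebra_simps)
    have "ge (a + 3 * e0 + 4 * e0) (2 * x)" using ge_two[OF gx] .
    then have "ge (a + 5 * e0 + 1) (2 * x)" by (rule ge_mono) (insert e0_pos, simp)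
    moreover have "ge (a + 5 * e0 + 1) (\<sigma> x - x)" using ge_mono[OF dx] by simp
    ultimately show ?thesis unfolding e using ge_add by blast
  qed
  define Z where "Z = \<sigma> (\<sigma> (\<sigma> \<alpha>)) - \<sigma> (\<sigma> \<alpha>) - \<sigma> \<alpha> + \<alpha>"
  have Zid: "Z = 2 * (\<sigma> \<alpha> - \<alpha>) + (tr - 4 * \<sigma> (\<sigma> \<alpha>) + 2 * (\<sigma> (\<sigma> \<alpha>) - 2 * \<sigma> \<alpha> + \<alpha>))"
    by (simp add: Z_def tr_def x_def s_add algebra_simps)
  have Z: "Z \<noteq> 0" "v Z = a + 5 * e0"
  proof -
    have A1: "v (2 * (\<sigma> \<alpha> - \<alpha>)) = v 2 + v (\<sigma> \<alpha> - \<alpha>)" by (rule v_mult) (use ab in auto)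
    have A: "2 * (\<sigma> \<alpha> - \<alpha>) \<noteq> 0" "v (2 * (\<sigma> \<alpha> - \<alpha>)) = a + 5 * e0"
      using ab(1) apply simp using A1 v2 ab(2) by linarith
    have B1: "ge (a + 5 * e0 + 1) (4 * \<sigma> (\<sigma> \<alpha>))"
    proof -
      have h: "ge (v (\<sigma> (\<sigma> \<alpha>)) + 4 * e0 + 4 * e0) (2 * (2 * \<sigma> (\<sigma> \<alpha>)))"
        by (rule ge_two[OF ge_two[OF ge_v]])
      have "ge (a + 5 * e0 + 1) (2 * (2 * \<sigma> (\<sigma> \<alpha>)))"
        by (rule ge_mono[OF h]) (insert e0_pos ss_v[OF al(1)] va, simp)
      moreover have "2 * (2 * \<sigma> (\<sigma> \<alpha>)) = 4 * \<sigma> (\<sigma> \<alpha>)" by simp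
      ultimately show ?thesis by metis
    qed
    have B2: "ge (a + 5 * e0 + 1) (2 * (\<sigma> (\<sigma> \<alpha>) - 2 * \<sigma> \<alpha> + \<alpha>))"
    proof -
      have h: "ge (v (\<sigma> (\<sigma> \<alpha>) - 2 * \<sigma> \<alpha> + \<alpha>) + 4 * e0) (2 * (\<sigma> (\<sigma> \<alpha>) - 2 * \<sigma> \<alpha> + \<alpha>))"
        by (rule ge_two[OF ge_v])
      show ?thesis by (rule ge_mono[OF h]) (insert e0_pos ab(6), simp)
    qed
    have B: "ge (v (2 * (\<sigma> \<alpha> - \<alpha>)) + 1) (tr - 4 * \<sigma> (\<sigma> \<alpha>) + 2 * (\<sigma> (\<sigma> \<alpha>) - 2 * \<sigma> \<alpha> + \<alpha>))"
      using A(2) ge_add[OF ge_diff[OF gtr B1] B2] by simp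
    from strict[OF A(1) B] A(2) show "Z \<noteq> 0" "v Z = a + 5 * e0" unfolding Zid by auto
  qed
  have key: "\<sigma> \<alpha> - \<alpha> - \<mu> \<noteq> 0 \<and> v (\<sigma> \<alpha> - \<alpha> - \<mu>) \<le> a + 2 * e0 \<and>
      (odd (v (\<sigma> \<alpha> - \<alpha> - \<mu>)) \<longrightarrow> v (\<sigma> \<alpha> - \<alpha> - \<mu>) = a + 2 * e0)"
    if h: "\<sigma> (\<sigma> \<mu>) = \<mu>" for \<mu>
  proof -
    define y where "y = \<sigma> \<alpha> - \<alpha> - \<mu>"
    have dy: "\<sigma> (\<sigma> y) - y = Z" using h by (simp add: y_def Z_def s_diff)
    have ny: "y \<noteq> 0" using dy Z by auto
    have "ge (v y + 3 * e0) (\<sigma> (\<sigma> y) - y)" using S2.F3'[OF ny] .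
    then have "v y + 3 * e0 \<le> a + 5 * e0" using dy Z by (simp add: ge_def)
    moreover have "odd (v y) \<longrightarrow> v y = a + 2 * e0" using S2.F3[OF ny] dy Z by auto
    ultimately show ?thesis using ny by (simp add: y_def)
  qed
  have "\<exists>\<mu>. \<sigma> (\<sigma> \<mu>) = \<mu> \<and> odd (v (\<sigma> \<alpha> - \<alpha> - \<mu>))"
  proof (rule ccontr)
    assume H: "\<not> ?thesis"
    have "\<exists>\<mu>. \<sigma> (\<sigma> \<mu>) = \<mu> \<and> v (\<sigma> \<alpha> - \<alpha> - \<mu>) \<ge> a + e0 + int n" for n
    proof (induction n)
      case 0
      show ?case using ab by (intro exI[of _ 0]) auto
    next
      case (Suc n)
      then obtain \<mu> where m: "\<sigma> (\<sigma> \<mu>) = \<mu>" "v (\<sigma> \<alpha> - \<alpha> - \<mu>) \<ge> a + e0 + int n" by blast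
      define y where "y = \<sigma> \<alpha> - \<alpha> - \<mu>"
      have ny: "y \<noteq> 0" using key[OF m(1)] y_def by simp
      have ev: "even (v y)" using H m y_def by blast
      obtain c' where c': "\<sigma> (\<sigma> c') = c'" "ge (v y + 1) (y - c')" using AppK1[OF ny ev] by blast
      have s2: "\<sigma> (\<sigma> (\<mu> + c')) = \<mu> + c'" using m(1) c'(1) by (simp add: s_add)
      have eq: "\<sigma> \<alpha> - \<alpha> - (\<mu> + c') = y - c'" by (simp add: y_def)
      have "y - c' \<noteq> 0" using key[OF s2] eq by simp
      then have "v (\<sigma> \<alpha> - \<alpha> - (\<mu> + c')) \<ge> v y + 1" using c'(2) unfolding eq by (simp add: ge_def)
      then show ?case using s2 m y_def by (intro exI[of _ "\<mu> + c'"]) auto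
    qed
    from this[of "nat (e0 + 1)"] obtain \<mu> where m: "\<sigma> (\<sigma> \<mu>) = \<mu>"
      "v (\<sigma> \<alpha> - \<alpha> - \<mu>) \<ge> a + e0 + int (nat (e0 + 1))" by blast
    then show False using key[OF m(1)] e0_pos by simp
  qed
  then obtain \<mu> where m: "\<sigma> (\<sigma> \<mu>) = \<mu>" "odd (v (\<sigma> \<alpha> - \<alpha> - \<mu>))" by blast
  have y: "\<sigma> \<alpha> - \<alpha> - \<mu> \<noteq> 0" "v (\<sigma> \<alpha> - \<alpha> - \<mu>) = a + 2 * e0" using key[OF m(1)] m(2) by auto
  have "ge (v (\<sigma> \<alpha> - \<alpha>) + 1) (- (\<sigma> \<alpha> - \<alpha> - \<mu>))"
    using y ab e0_pos v_minus_comm[of \<mu> "\<sigma> \<alpha> - \<alpha>"] by (simp add: ge_def)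
  from strict[OF ab(1) this] have "\<mu> \<noteq> 0" "v \<mu> = a + e0" using ab by auto
  then show ?thesis using al(1) va m(1) y by blast
qed

end

lemma fa_inverse: assumes "field_automorphism g" shows "g (inverse x) = inverse (g x)"
proof -
  have add: "\<And>x y. g (x + y) = g x + g y" and mult: "\<And>x y. g (x * y) = g x * g y" and inj: "inj g"
    using assms by (auto simp: field_automorphism_def bij_def)
  have "g 0 = g 0 + g 0" using add[of 0 0] by simp
  then have g0: "g 0 = 0" by (metis add_cancel_left_right)
  have gz: "g x = 0 \<longleftrightarrow> x = 0" for x using inj g0 by (metis injD)
  have g1: "g 1 = 1"
  proof -
    have "g 1 = g 1 * g 1" using mult[of 1 1] by simp
    moreover have "g 1 \<noteq> 0" using gz by simp
    ultimately show ?thesis by (metis mult_cancel_right1)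
  qed
  show ?thesis
  proof (cases "x = 0")
    case True then show ?thesis using g0 by simp
  next
    case False
    have "g x * g (inverse x) = 1" using mult[of x "inverse x"] False g1 by simp
    then show ?thesis by (metis inverse_unique)
  qed
qed

lemma fa_funpow: assumes "field_automorphism g" shows "field_automorphism (g ^^ n)"
proof (induction n)
  case 0 then show ?case by (auto simp: field_automorphism_def bij_def inj_def surj_def)
next
  case (Suc n)
  have "g ^^ Suc n = g \<circ> (g ^^ n)" by simp
  then show ?case using Suc assms unfolding field_automorphism_def by (auto intro: bij_comp)
qed

context dval begin

definition PP :: "int \<Rightarrow> ('a \<Rightarrow> 'a) \<Rightarrow> bool" where
  "PP j g \<longleftrightarrow> (\<forall>x. ge 0 x \<longrightarrow> ge (j + 1) (g x - x))"

lemma lrg: "lower_ram_group \<sigma> v j = {g \<in> {\<sigma> ^^ k | k. k < 4}. PP j g}"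
  by (simp add: lower_ram_group_def PP_def val_integral_def val_close_def ge_def)

lemma PP_mono: "PP j g \<Longrightarrow> j' \<le> j \<Longrightarrow> PP j' g"
  unfolding PP_def using ge_mono by (meson add_right_mono)

lemma PP_id: "PP j id" by (simp add: PP_def)

lemma PP_comp: assumes "j \<ge> 0" "PP j g" "PP j h" shows "PP j (g \<circ> h)"
  unfolding PP_def
proof (intro allI impI)
  fix x assume x: "ge 0 x"
  have hx: "ge (j + 1) (h x - x)" using assms(3) x by (simp add: PP_def)
  have "ge 0 (h x)"
  proof -
    have "h x = x + (h x - x)" by simp
    moreover have "ge 0 (h x - x)" using ge_mono[OF hx] assms(1) by simp
    ultimately show ?thesis using ge_add[OF x] by metis
  qed
  then have "ge (j + 1) (g (h x) - h x)" using assms(2) by (simp add: PP_def)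
  then show "ge (j + 1) ((g \<circ> h) x - x)" using ge_add[OF _ hx] by fastforce
qed

lemma not_id_PP: assumes "field_automorphism g" "g \<noteq> id" shows "\<exists>N. \<not> PP N g"
proof -
  have "\<exists>x. ge 0 x \<and> g x \<noteq> x"
  proof (rule ccontr)
    assume H: "\<not> ?thesis"
    have "g x = x" for x
    proof (cases "ge 0 x")
      case True then show ?thesis using H by blast
    next
      case False
      then have x: "x \<noteq> 0" "v x < 0" by (auto simp: ge_def)
      then have "ge 0 (inverse x)" by (simp add: ge_def v_inverse)
      then have "g (inverse x) = inverse x" using H by blast
      then show ?thesis using fa_inverse[OF assms(1)] by (metis inverse_inverse_eq)
    qed
    then show False using assms(2) by auto
  qed
  then obtain x where x: "ge 0 x" "g x \<noteq> x" by blast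
  have "\<not> ge (v (g x - x) + 1) (g x - x)" using x(2) by (simp add: ge_def)
  then have "\<not> PP (v (g x - x)) g" using x(1) by (auto simp: PP_def)
  then show ?thesis by blast
qed

lemma breaks_analysis:
  fixes \<sigma> :: "'a \<Rightarrow> 'a"
  assumes aut: "field_automorphism \<sigma>" and o4: "\<sigma> ^^ 4 = id" and o2: "\<sigma> ^^ 2 \<noteq> id" and e: "e0 \<ge> 1"
    and br: "lower_breaks \<sigma> v = {e0, 3 * e0}"
  shows "PP e0 \<sigma> \<and> \<not> PP (e0 + 1) \<sigma> \<and> PP (3 * e0) (\<sigma> ^^ 2) \<and> \<not> PP (3 * e0 + 1) (\<sigma> ^^ 2)"
proof -
  define F where "F = {\<sigma> ^^ k | k. k < (4::nat)}"
  define G where "G j = {g \<in> F. PP j g}" for j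
  have G: "lower_ram_group \<sigma> v j = G j" for j by (simp add: lrg G_def F_def)
  have F: "F = {id, \<sigma>, \<sigma> ^^ 2, \<sigma> ^^ 3}"
  proof
    show "F \<subseteq> {id, \<sigma>, \<sigma> ^^ 2, \<sigma> ^^ 3}"
    proof
      fix g assume "g \<in> F"
      then obtain k where k: "g = \<sigma> ^^ k" "k < 4" by (auto simp: F_def)
      then have "k = 0 \<or> k = 1 \<or> k = 2 \<or> k = 3" by arith
      then show "g \<in> {id, \<sigma>, \<sigma> ^^ 2, \<sigma> ^^ 3}" using k(1) by auto
    qed
    have a: "\<sigma> ^^ k \<in> F" if "k < 4" for k using that by (auto simp: F_def)
    show "{id, \<sigma>, \<sigma> ^^ 2, \<sigma> ^^ 3} \<subseteq> F"
      using a[of 0] a[of 1] a[of 2] a[of 3] by simp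
  qed
  have const: "G j = G (j + 1)" if "j \<ge> 1" "j \<noteq> e0" "j \<noteq> 3 * e0" for j
    using br that unfolding lower_breaks_def G[symmetric] by blast
  have brk: "G j \<noteq> G (j + 1)" if "j = e0 \<or> j = 3 * e0" for j
  proof -
    have "j \<in> lower_breaks \<sigma> v" using br that by blast
    then show ?thesis unfolding lower_breaks_def G by blast
  qed
  have Gsub: "G (j + 1) \<subseteq> G j" for j unfolding G_def using PP_mono by force
  have idG: "id \<in> G j" for j unfolding G_def F using PP_id by simp
  have pw: "PP j (\<sigma> ^^ k)" if "j \<ge> 0" "PP j \<sigma>" for j k
  proof (induction k)
    case 0 then show ?case using PP_id by (simp add: id_def)
  next
    case (Suc k)
    show ?case unfolding funpow.simps(2) by (rule PP_comp[OF that(1) that(2) Suc])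
  qed
  have s9: "\<sigma> ^^ 3 \<circ> \<sigma> ^^ 3 \<circ> \<sigma> ^^ 3 = \<sigma>"
  proof -
    have "\<sigma> ^^ 3 \<circ> \<sigma> ^^ 3 \<circ> \<sigma> ^^ 3 = \<sigma> ^^ (1 + 4 + 4)" by (simp only: funpow_add[symmetric]) simp
    also have "... = \<sigma>" by (simp only: funpow_add o4) simp
    finally show ?thesis .
  qed
  have s3: "PP j \<sigma>" if "j \<ge> 0" "PP j (\<sigma> ^^ 3)" for j
    using PP_comp[OF that(1) PP_comp[OF that(1) that(2) that(2)] that(2)] s9 by simp
  have full: "G j = F" if "j \<ge> 0" "PP j \<sigma>" for j
    unfolding G_def F_def using pw[OF that] by auto
  have up: "G (j0) = G (j0 + int n)" if "\<And>j. j0 \<le> j \<Longrightarrow> j < j0 + int n \<Longrightarrow> j \<ge> 1 \<and> j \<noteq> e0 \<and> j \<noteq> 3 * e0" for j0 n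
    using that
  proof (induction n)
    case (Suc n)
    have "G j0 = G (j0 + int n)" using Suc by simp
    also have "... = G (j0 + int n + 1)" using Suc.prems[of "j0 + int n"] const by simp
    finally show ?case by (simp add: algebra_simps)
  qed simp
  have mid: "G (e0 + 1) = G (3 * e0)"
    using up[of "e0 + 1" "nat (2 * e0 - 1)"] e by (simp add: algebra_simps)
  have top: "G (3 * e0 + 1) = G (3 * e0 + 1 + int n)" for n
    using up[of "3 * e0 + 1" n] e by simp
  have G3: "G (3 * e0 + 1) = {id}"
  proof -
    have "g = id" if g: "g \<in> G (3 * e0 + 1)" for g
    proof (rule ccontr)
      assume "g \<noteq> id"
      moreover have "g \<in> F" using g G_def by simp
      then have "field_automorphism g" using fa_funpow[OF aut] F_def by auto
      ultimately obtain N where N: "\<not> PP N g" using not_id_PP by blast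
      define n where "n = nat (N - 3 * e0)"
      have "g \<in> G (3 * e0 + 1 + int n)" using top g by simp
      then have "PP (3 * e0 + 1 + int n) g" by (simp add: G_def)
      then have "PP N g" by (rule PP_mono) (simp add: n_def)
      then show False using N by simp
    qed
    then show ?thesis using idG by blast
  qed
  obtain g where g: "g \<in> G (3 * e0)" "g \<noteq> id"
  proof -
    have "G (3 * e0) \<noteq> {id}" using brk[of "3 * e0"] G3 by simp
    moreover have "id \<in> G (3 * e0)" using idG .
    ultimately show ?thesis using that by blast
  qed
  have nB: "\<not> PP (e0 + 1) \<sigma>"
  proof
    assume "PP (e0 + 1) \<sigma>"
    then have "G (e0 + 1) = F" using full e by simp
    moreover have "G e0 \<subseteq> F" by (auto simp: G_def)
    ultimately show False using Gsub[of e0] brk[of e0] by blast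
  qed
  have nB3: "\<not> PP (e0 + 1) (\<sigma> ^^ 3)" using s3 nB e by auto
  have gF: "g \<in> F" "PP (e0 + 1) g" using g mid by (auto simp: G_def)
  have g2: "g = \<sigma> ^^ 2" using gF g(2) nB nB3 F by auto
  have C: "PP (3 * e0) (\<sigma> ^^ 2)" using g g2 by (simp add: G_def)
  have D: "\<not> PP (3 * e0 + 1) (\<sigma> ^^ 2)"
  proof
    assume "PP (3 * e0 + 1) (\<sigma> ^^ 2)"
    then have "\<sigma> ^^ 2 \<in> G (3 * e0 + 1)" by (simp add: G_def F)
    then show False using G3 o2 by simp
  qed
  have A: "PP e0 \<sigma>"
  proof (rule ccontr)
    assume nA: "\<not> PP e0 \<sigma>"
    have nA3: "\<not> PP e0 (\<sigma> ^^ 3)" using s3 nA e by auto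
    have "G e0 \<subseteq> {id, \<sigma> ^^ 2}" using nA nA3 by (auto simp: G_def F)
    moreover have "\<sigma> ^^ 2 \<in> G (e0 + 1)" using gF g2 by (simp add: G_def)
    ultimately have "G e0 \<subseteq> G (e0 + 1)" using idG by blast
    then show False using Gsub[of e0] brk[of e0] by blast
  qed
  show ?thesis using A nB C D by blast
qed

end
theorem lemma3p7:
  fixes \<sigma> :: "'a::field_char_0 \<Rightarrow> 'a" and v2 :: "'a \<Rightarrow> int"
    and e0 b1 b2 :: int
  assumes K2_local: "finite_ext_Q2 v2"
    and aut: "field_automorphism \<sigma>"
    and ord4: "\<sigma> ^^ 4 = id" and not_ord2: "\<sigma> ^^ 2 \<noteq> id"
    and tot_ram: "\<forall>x\<in>fixed_field \<sigma>. x \<noteq> 0 \<longrightarrow> 4 dvd v2 x"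
    and e0_def: "v2 2 = 4 * e0"
    and e0_odd: "odd e0"
    and b1: "b1 = e0" and b2: "b2 = b1 + 2 * e0"
    and breaks: "lower_breaks \<sigma> v2 = {b1, b2}"
  shows "\<forall>a::int. odd a \<longrightarrow>
    (\<exists>\<alpha> \<rho>. \<alpha> \<noteq> 0 \<and> v2 \<alpha> = a \<and> \<rho> \<noteq> 0 \<and> v2 \<rho> = a + (b2 - b1) \<and>
      (a mod 4 = e0 mod 4 \<longrightarrow>
         (let \<mu>1 = \<sigma> \<alpha> - \<alpha> - \<rho> in
            \<mu>1 \<in> fixed_field (\<sigma> ^^ 2) \<and> \<mu>1 \<noteq> 0 \<and> v2 \<mu>1 = a + b1)) \<and>
      (a mod 4 = (3 * e0) mod 4 \<longrightarrow>
         (let \<mu>0 = \<sigma> \<alpha> + \<alpha> - \<rho> in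
            \<mu>0 \<in> fixed_field \<sigma> \<and> \<mu>0 \<noteq> 0 \<and> v2 \<mu>0 = a + b1)))"
proof -
  have nv: "normalized_discrete_valuation v2" and fin: "finite_residue_field v2" and v2pos: "v2 2 > 0"
    using K2_local by (auto simp: finite_ext_Q2_def)
  interpret dval v2 by (rule dval.intro[OF nv])
  have e0pos: "e0 \<ge> 1" using v2pos e0_def by simp
  have br: "lower_breaks \<sigma> v2 = {e0, 3 * e0}" using breaks b1 b2 by simp
  have BA: "PP e0 \<sigma> \<and> \<not> PP (e0 + 1) \<sigma> \<and> PP (3 * e0) (\<sigma> ^^ 2) \<and> \<not> PP (3 * e0 + 1) (\<sigma> ^^ 2)"
    by (rule breaks_analysis[OF aut ord4 not_ord2 e0pos br])
  have s2: "(\<sigma> ^^ 2) x = \<sigma> (\<sigma> x)" for x by (simp add: numeral_2_eq_2)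
  have s4: "\<sigma> (\<sigma> (\<sigma> (\<sigma> x))) = x" for x
  proof -
    have "(\<sigma> ^^ 4) x = x" using ord4 by simp
    then show ?thesis by (simp add: numeral_eq_Suc)
  qed
  interpret C: cyc v2 \<sigma> e0
  proof (unfold_locales)
    show "field_automorphism \<sigma>" by (rule aut)
    show "\<And>x. \<sigma> (\<sigma> (\<sigma> (\<sigma> x))) = x" by (rule s4)
    show "v2 2 = 4 * e0" by (rule e0_def)
    show "odd e0" by (rule e0_odd)
    show "1 \<le> e0" by (rule e0pos)
    show "finite_residue_field v2" by (rule fin)
    show "\<And>x. ge 0 x \<Longrightarrow> ge (e0 + 1) (\<sigma> x - x)" using BA by (simp add: PP_def)
    show "\<exists>x. ge 0 x \<and> \<not> ge (e0 + 2) (\<sigma> x - x)" using BA by (auto simp: PP_def add.assoc)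
    show "\<And>x. ge 0 x \<Longrightarrow> ge (3 * e0 + 1) (\<sigma> (\<sigma> x) - x)" using BA by (simp add: PP_def s2)
    show "\<exists>x. ge 0 x \<and> \<not> ge (3 * e0 + 2) (\<sigma> (\<sigma> x) - x)" using BA by (auto simp: PP_def s2 add.assoc)
  qed
  have ff2: "y \<in> fixed_field (\<sigma> ^^ 2) \<longleftrightarrow> \<sigma> (\<sigma> y) = y" for y by (simp add: fixed_field_def s2)
  have ff1: "y \<in> fixed_field \<sigma> \<longleftrightarrow> \<sigma> y = y" for y by (simp add: fixed_field_def)
  show ?thesis
  proof (intro allI impI)
    fix a :: int assume oa: "odd a"
    have b21: "b2 - b1 = 2 * e0" using b2 by simp
    have cases: "(a mod 4 = e0 mod 4 \<and> a mod 4 \<noteq> (3 * e0) mod 4) \<or> (a mod 4 = (3 * e0) mod 4 \<and> a mod 4 \<noteq> e0 mod 4)"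
      using oa e0_odd by presburger
    then show "\<exists>\<alpha> \<rho>. \<alpha> \<noteq> 0 \<and> v2 \<alpha> = a \<and> \<rho> \<noteq> 0 \<and> v2 \<rho> = a + (b2 - b1) \<and>
      (a mod 4 = e0 mod 4 \<longrightarrow>
         (let \<mu>1 = \<sigma> \<alpha> - \<alpha> - \<rho> in
            \<mu>1 \<in> fixed_field (\<sigma> ^^ 2) \<and> \<mu>1 \<noteq> 0 \<and> v2 \<mu>1 = a + b1)) \<and>
      (a mod 4 = (3 * e0) mod 4 \<longrightarrow>
         (let \<mu>0 = \<sigma> \<alpha> + \<alpha> - \<rho> in
            \<mu>0 \<in> fixed_field \<sigma> \<and> \<mu>0 \<noteq> 0 \<and> v2 \<mu>0 = a + b1))"
    proof
      assume h: "a mod 4 = e0 mod 4 \<and> a mod 4 \<noteq> (3 * e0) mod 4"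
      obtain \<alpha> \<mu> where am: "\<alpha> \<noteq> 0" "v2 \<alpha> = a" "\<sigma> (\<sigma> \<mu>) = \<mu>" "\<mu> \<noteq> 0" "v2 \<mu> = a + e0"
        "\<sigma> \<alpha> - \<alpha> - \<mu> \<noteq> 0" "v2 (\<sigma> \<alpha> - \<alpha> - \<mu>) = a + 2 * e0"
        using C.caseA[OF oa conjunct1[OF h]] by blast
      define \<rho> where "\<rho> = \<sigma> \<alpha> - \<alpha> - \<mu>"
      have m: "\<sigma> \<alpha> - \<alpha> - \<rho> = \<mu>" by (simp add: \<rho>_def)
      show ?thesis
        apply (rule exI[of _ \<alpha>], rule exI[of _ \<rho>])
        using am h b21 b1 unfolding m Let_def ff2 \<rho>_def[symmetric] by simp
    next
      assume h: "a mod 4 = (3 * e0) mod 4 \<and> a mod 4 \<noteq> e0 mod 4"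
      obtain \<alpha> c where ac: "\<alpha> \<noteq> 0" "v2 \<alpha> = a" "\<sigma> c = c" "c \<noteq> 0" "v2 c = a + e0"
        "\<sigma> \<alpha> - \<alpha> - c \<noteq> 0" "v2 (\<sigma> \<alpha> - \<alpha> - c) = a + 2 * e0"
        using C.caseB[OF oa conjunct1[OF h]] by blast
      define \<rho> where "\<rho> = (\<sigma> \<alpha> - \<alpha> - c) + 2 * \<alpha>"
      have m: "\<sigma> \<alpha> + \<alpha> - \<rho> = c" by (simp add: \<rho>_def)
      have g2: "ge (v2 (\<sigma> \<alpha> - \<alpha> - c) + 1) (2 * \<alpha>)"
      proof -
        have "ge (v2 \<alpha> + 4 * e0) (2 * \<alpha>)" by (rule C.ge_two[OF ge_v])
        then show ?thesis by (rule ge_mono) (insert ac e0pos, simp)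
      qed
      have r: "\<rho> \<noteq> 0" "v2 \<rho> = a + 2 * e0" using strict[OF ac(6) g2] ac(7) unfolding \<rho>_def by auto
      show ?thesis
        apply (rule exI[of _ \<alpha>], rule exI[of _ \<rho>])
        using ac h b21 b1 r unfolding m Let_def ff1 by simp
    qed
  qed
qed

end
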